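(* Let $(X,E,\ell)$ be a weighted tree and let $x\in X$. (a) If $\sum_{e\ni x}\frac{1}{1+e^{-\ell(e)}}\le\deg(x)-1$, then $x$ does not belong to the support of the diversity-maximizing measure of $X$. (b) If $\ell(e)\le\log 2$ for all $e\in E$, then no branch point of $X$ (vertex of degree at least $3$) belongs to the support of the diversity-maximizing measure of $X$.
   Context: A weighted tree is a triple $(X,E,\ell)$ with $(X,E)$ a finite simple undirected graph that is a tree and $\ell\colon E\to(0,\infty)$ edge lengths; the vertex set $X$ is a metric space with $d(x,y)$ the total length of the unique simple path between $x$ and $y$. $\deg x$ is the number of neighbours of $x$; $\sum_{e\ni x}$ is over edges containing $x$. The diversity-maximizing measure is the unique probability measure $\mu$ on $X$ minimizing $\sum_{x,y\in X}e^{-d(x,y)}\mu(x)\mu(y)$; its support is $\{x:\mu(x)>0\}$. *)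

theory Defs
  imports Complex_Main
begin

definition simple_graph :: "'a set \<Rightarrow> 'a set set \<Rightarrow> bool" where
  "simple_graph X E \<longleftrightarrow> finite X \<and> (\<forall>e\<in>E. \<exists>u v. e = {u, v} \<and> u \<in> X \<and> v \<in> X \<and> u \<noteq> v)"

definition simple_path :: "'a set set \<Rightarrow> 'a list \<Rightarrow> 'a \<Rightarrow> 'a \<Rightarrow> bool" where
  "simple_path E p x y \<longleftrightarrow> p \<noteq> [] \<and> hd p = x \<and> last p = y \<and> distinct p \<and>
     (\<forall>i. Suc i < length p \<longrightarrow> {p ! i, p ! Suc i} \<in> E)"

definition is_cycle :: "'a set set \<Rightarrow> 'a list \<Rightarrow> bool" where
  "is_cycle E c \<longleftrightarrow> length c \<ge> 3 \<and> distinct c \<and>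
     (\<forall>i. Suc i < length c \<longrightarrow> {c ! i, c ! Suc i} \<in> E) \<and> {last c, hd c} \<in> E"

definition is_tree :: "'a set \<Rightarrow> 'a set set \<Rightarrow> bool" where
  "is_tree X E \<longleftrightarrow> simple_graph X E \<and> X \<noteq> {} \<and>
     (\<forall>x\<in>X. \<forall>y\<in>X. \<exists>p. simple_path E p x y) \<and>
     (\<nexists>c. is_cycle E c)"

definition weighted_tree :: "'a set \<Rightarrow> 'a set set \<Rightarrow> ('a set \<Rightarrow> real) \<Rightarrow> bool" where
  "weighted_tree X E l \<longleftrightarrow> is_tree X E \<and> (\<forall>e\<in>E. l e > 0)"

definition path_length :: "('a set \<Rightarrow> real) \<Rightarrow> 'a list \<Rightarrow> real" where
  "path_length l p = (\<Sum>i<length p - 1. l {p ! i, p ! Suc i})"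

definition tree_dist :: "'a set set \<Rightarrow> ('a set \<Rightarrow> real) \<Rightarrow> 'a \<Rightarrow> 'a \<Rightarrow> real" where
  "tree_dist E l x y = (THE r. \<exists>p. simple_path E p x y \<and> r = path_length l p)"

definition degree :: "'a set set \<Rightarrow> 'a \<Rightarrow> nat" where
  "degree E x = card {y. {x, y} \<in> E}"

definition prob_on :: "'a set \<Rightarrow> ('a \<Rightarrow> real) \<Rightarrow> bool" where
  "prob_on X \<mu> \<longleftrightarrow> (\<forall>x\<in>X. \<mu> x \<ge> 0) \<and> (\<forall>x. x \<notin> X \<longrightarrow> \<mu> x = 0) \<and> (\<Sum>x\<in>X. \<mu> x) = 1"

definition similarity_form :: "'a set \<Rightarrow> 'a set set \<Rightarrow> ('a set \<Rightarrow> real) \<Rightarrow> ('a \<Rightarrow> real) \<Rightarrow> real" where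
  "similarity_form X E l \<mu> = (\<Sum>x\<in>X. \<Sum>y\<in>X. exp (- tree_dist E l x y) * \<mu> x * \<mu> y)"

definition maxdiv_measure :: "'a set \<Rightarrow> 'a set set \<Rightarrow> ('a set \<Rightarrow> real) \<Rightarrow> 'a \<Rightarrow> real" where
  "maxdiv_measure X E l = (THE \<mu>. prob_on X \<mu> \<and>
     (\<forall>\<nu>. prob_on X \<nu> \<longrightarrow> similarity_form X E l \<mu> \<le> similarity_form X E l \<nu>))"

definition support :: "'a set \<Rightarrow> ('a \<Rightarrow> real) \<Rightarrow> 'a set" where
  "support X \<mu> = {x\<in>X. \<mu> x > 0}"

end

theory Submission
  imports Defs "HOL-Analysis.Function_Topology"
begin

abbreviation walk :: "'a set set \<Rightarrow> 'a list \<Rightarrow> bool" where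
  "walk E p \<equiv> successively (\<lambda>a b. {a,b} \<in> E) p"

lemma simple_path_alt:
  "simple_path E p x y \<longleftrightarrow> p \<noteq> [] \<and> hd p = x \<and> last p = y \<and> distinct p \<and> walk E p"
  unfolding simple_path_def successively_conv_nth by blast

lemma is_cycle_alt:
  "is_cycle E c \<longleftrightarrow> length c \<ge> 3 \<and> distinct c \<and> walk E c \<and> {last c, hd c} \<in> E"
  unfolding is_cycle_def successively_conv_nth by blast

lemma distinct_hd_last:
  assumes "distinct p" "p \<noteq> []" "hd p = last p" shows "p = [hd p]"
  using assms by (cases p) (auto split: if_splits)

lemma unique_path_aux:
  assumes nc: "\<nexists>c. is_cycle E c"
  shows "simple_path E p x y \<Longrightarrow> simple_path E q x y \<Longrightarrow> p = q"
proof (induction "length p + length q" arbitrary: p q x y rule: less_induct)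
  case less
  note sp = less.prems(1)[unfolded simple_path_alt] and sq = less.prems(2)[unfolded simple_path_alt]
  show ?case
  proof (cases "x = y")
    case True
    then show ?thesis using sp sq distinct_hd_last by metis
  next
    case xy: False
    show ?thesis
    proof (cases "\<exists>v. v \<in> set p \<and> v \<in> set q \<and> v \<noteq> x \<and> v \<noteq> y")
      case True
      then obtain v where v: "v \<in> set p" "v \<in> set q" "v \<noteq> x" "v \<noteq> y" by blast
      obtain p1 p2 where p: "p = p1 @ v # p2" using v(1) split_list by metis
      obtain q1 q2 where q: "q = q1 @ v # q2" using v(2) split_list by metis
      have ne: "p1 \<noteq> []" "p2 \<noteq> []" "q1 \<noteq> []" "q2 \<noteq> []"
        using sp sq v p q by auto
      have a1: "simple_path E (p1 @ [v]) x v" "simple_path E (q1 @ [v]) x v"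
        using sp sq ne unfolding p q simple_path_alt
        by (auto simp: successively_append_iff)
      have a2: "simple_path E (v # p2) v y" "simple_path E (v # q2) v y"
        using sp sq ne unfolding p q simple_path_alt
        by (auto simp: successively_append_iff)
      have "p1 @ [v] = q1 @ [v]"
        by (rule less.hyps[OF _ a1(1) a1(2)]) (use ne p q in auto)
      moreover have "v # p2 = v # q2"
        by (rule less.hyps[OF _ a2(1) a2(2)]) (use ne p q in auto)
      ultimately show ?thesis using p q by simp
    next
      case False
      have lq: "length q \<ge> 2"
      proof (rule ccontr)
        assume "\<not> ?thesis"
        then have "length q = 1" using sq by (cases q) (auto simp: Suc_le_eq)
        then show False using sq xy by (cases q) auto
      qed
      have tq: "tl q \<noteq> []" using lq by (cases q) auto
      have "q = hd q # tl q" using sq by (cases q) auto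
      moreover have "tl q = butlast (tl q) @ [last (tl q)]" using tq by simp
      moreover have "last (tl q) = last q" using tq by (cases q) auto
      ultimately have q: "q = x # butlast (tl q) @ [y]" using sq by metis
      define qm where "qm = butlast (tl q)"
      note q = q[folded qm_def]
      show ?thesis
      proof (rule ccontr)
        assume pq: "p \<noteq> q"
        define c where "c = p @ rev qm"
        have lp: "length p \<ge> 2"
        proof (rule ccontr)
          assume "\<not> ?thesis"
          then have "length p = 1" using sp by (cases p) (auto simp: Suc_le_eq)
          then show False using sp xy by (cases p) auto
        qed
        have lc: "length c \<ge> 3"
        proof (cases "qm = []")
          case True
          have "length p \<noteq> 2"
          proof
            assume "length p = 2"
            then obtain a b where "p = [a,b]" by (cases p; cases "tl p") auto
            then show False using sp pq q True by auto
          qed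
          then show ?thesis using lp c_def by auto
        next
          case False then show ?thesis using lp c_def by (cases qm) auto
        qed
        have dc: "distinct c" using sp sq False unfolding c_def q by auto
        have wq0: "walk E (x # (qm @ [y]))" using sq q by simp
        then have wq: "walk E qm" "qm \<noteq> [] \<Longrightarrow> {last qm, y} \<in> E" "{x, hd (qm @ [y])} \<in> E"
          by (auto simp: successively_Cons successively_append_iff)
        have wrev: "walk E (rev qm)" using wq(1) by (simp add: insert_commute)
        have "walk E c" using sp wq wrev unfolding c_def
          by (auto simp: successively_append_iff hd_rev insert_commute)
        moreover have "{last c, hd c} \<in> E" using sp sq lp wq unfolding c_def
          by (cases "qm = []") (auto simp: last_rev insert_commute)
        ultimately have "is_cycle E c" using lc dc unfolding is_cycle_alt by blast
        then show False using nc by blast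
      qed
    qed
  qed
qed

lemma tree_unique: "is_tree X E \<Longrightarrow> simple_path E p x y \<Longrightarrow> simple_path E q x y \<Longrightarrow> p = q"
  using unique_path_aux[of E p x y q] unfolding is_tree_def by blast

lemma edge_in: "simple_graph X E \<Longrightarrow> {a,b} \<in> E \<Longrightarrow> a \<in> X \<and> b \<in> X \<and> a \<noteq> b"
  unfolding simple_graph_def by (force simp: doubleton_eq_iff)

lemma walk_in_X: "simple_graph X E \<Longrightarrow> walk E p \<Longrightarrow> p \<noteq> [] \<Longrightarrow> hd p \<in> X \<Longrightarrow> set p \<subseteq> X"
proof (induction p)
  case Nil then show ?case by simp
next
  case (Cons a p)
  show ?case
  proof (cases p)
    case Nil then show ?thesis using Cons by simp
  next
    case (Cons b p')
    have "{a,b} \<in> E" using Cons.prems \<open>p = b # p'\<close> by simp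
    then have "b \<in> X" using edge_in[OF Cons.prems(1)] by blast
    moreover have "walk E p" using Cons.prems \<open>p = b # p'\<close> by simp
    ultimately have "set p \<subseteq> X" using Cons.IH Cons.prems \<open>p = b # p'\<close> by simp
    then show ?thesis using Cons.prems by simp
  qed
qed

lemma path_in_X: "simple_graph X E \<Longrightarrow> simple_path E p x y \<Longrightarrow> x \<in> X \<Longrightarrow> set p \<subseteq> X"
  unfolding simple_path_alt using walk_in_X by blast

lemma tree_path_exists: "is_tree X E \<Longrightarrow> x \<in> X \<Longrightarrow> y \<in> X \<Longrightarrow> \<exists>p. simple_path E p x y"
  unfolding is_tree_def by blast

lemma tree_dist_eq: "is_tree X E \<Longrightarrow> simple_path E p x y \<Longrightarrow> tree_dist E l x y = path_length l p"
  unfolding tree_dist_def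
  by (rule the_equality) (auto dest: tree_unique)

lemma path_length_single [simp]: "path_length l [a] = 0"
  by (simp add: path_length_def)

lemma path_length_Cons2 [simp]: "path_length l (a # b # p) = l {a,b} + path_length l (b # p)"
  unfolding path_length_def by (simp del: sum.lessThan_Suc add: sum.lessThan_Suc_shift)

lemma path_length_Cons: "p \<noteq> [] \<Longrightarrow> path_length l (a # p) = l {a, hd p} + path_length l p"
  by (cases p) auto

lemma path_length_rev: "path_length l (rev p) = path_length l p"
proof -
  have "path_length l (rev p) = (\<Sum>i<length p - 1. l {rev p ! i, rev p ! Suc i})"
    by (simp add: path_length_def)
  also have "\<dots> = (\<Sum>i<length p - 1. l {p ! (length p - 1 - Suc i), p ! Suc (length p - 1 - Suc i)})"
  proof (rule sum.cong[OF refl])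
    fix i assume "i \<in> {..<length p - 1}"
    then have i: "Suc i < length p" by auto
    have "rev p ! i = p ! (length p - 1 - i)" using i by (simp add: rev_nth)
    moreover have "rev p ! Suc i = p ! (length p - 1 - Suc i)" using i by (simp add: rev_nth)
    moreover have "Suc (length p - 1 - Suc i) = length p - 1 - i" using i by simp
    ultimately show "l {rev p ! i, rev p ! Suc i} = l {p ! (length p - 1 - Suc i), p ! Suc (length p - 1 - Suc i)}"
      by (simp add: insert_commute)
  qed
  also have "\<dots> = path_length l p"
    unfolding path_length_def by (rule sum.nat_diff_reindex)
  finally show ?thesis .
qed

lemma simple_path_rev: "simple_path E p x y \<Longrightarrow> simple_path E (rev p) y x"
  unfolding simple_path_alt by (auto simp: hd_rev last_rev insert_commute)

lemma tree_dist_self: "is_tree X E \<Longrightarrow> tree_dist E l x x = 0"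
  using tree_dist_eq[of X E "[x]" x x l] by (simp add: simple_path_alt)

lemma tree_dist_sym: "is_tree X E \<Longrightarrow> x \<in> X \<Longrightarrow> y \<in> X \<Longrightarrow> tree_dist E l x y = tree_dist E l y x"
  using tree_path_exists[of X E x y] tree_dist_eq simple_path_rev path_length_rev by metis

lemma tree_leaf:
  assumes t: "is_tree X E" and c2: "card X \<ge> 2"
  shows "\<exists>v u. v \<in> X \<and> {y. {v,y} \<in> E} = {u}"
proof -
  have sg: "simple_graph X E" and fX: "finite X" using t unfolding is_tree_def simple_graph_def by auto
  define P where "P = {p. p \<noteq> [] \<and> distinct p \<and> walk E p \<and> set p \<subseteq> X}"
  have "P \<subseteq> {xs. set xs \<subseteq> X \<and> length xs \<le> card X}"
  proof
    fix p assume "p \<in> P"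
    then have "distinct p" "set p \<subseteq> X" by (auto simp: P_def)
    then show "p \<in> {xs. set xs \<subseteq> X \<and> length xs \<le> card X}"
      using card_mono[OF fX, of "set p"] distinct_card[of p] by simp
  qed
  then have fP: "finite P" using finite_lists_length_le[OF fX] finite_subset by blast
  obtain a b where ab: "a \<in> X" "b \<in> X" "a \<noteq> b"
  proof -
    have "\<not> (\<forall>a\<in>X. \<forall>b\<in>X. a = b)"
    proof
      assume "\<forall>a\<in>X. \<forall>b\<in>X. a = b"
      then have "card X \<le> 1" using card_le_Suc0_iff_eq[OF fX] by simp
      then show False using c2 by simp
    qed
    then show ?thesis using that by blast
  qed
  obtain p0 where p0: "simple_path E p0 a b" using tree_path_exists[OF t ab(1,2)] by blast
  have "p0 \<in> P" using p0 path_in_X[OF sg p0 ab(1)] unfolding P_def simple_path_alt by blast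
  then have Pne: "P \<noteq> {}" by blast
  have lp0: "length p0 \<ge> 2" using p0 ab(3) unfolding simple_path_alt
    by (cases p0; cases "tl p0") auto
  define m where "m = Max (length ` P)"
  have "m \<in> length ` P" using fP Pne unfolding m_def by simp
  then obtain p where pP: "p \<in> P" and pm: "length p = m" by blast
  have maxp: "\<And>q. q \<in> P \<Longrightarrow> length q \<le> length p"
    using fP pm unfolding m_def by simp
  have lp: "length p \<ge> 2" using maxp[OF \<open>p0 \<in> P\<close>] lp0 by simp
  have "length (rev p) \<ge> 2" using lp by simp
  then obtain r u v where rp: "rev p = v # u # r"
    by (metis One_nat_def Suc_1 Suc_le_length_iff)
  then have "p = rev (v # u # r)" by (metis rev_rev_ident)
  then have p: "p = rev r @ [u, v]" by simp
  have pd: "distinct p" "walk E p" "set p \<subseteq> X" using pP unfolding P_def by auto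
  have uv: "{u,v} \<in> E" using pd(2) unfolding p by (simp add: successively_append_iff)
  have vX: "v \<in> X" using pd(3) p by auto
  have "{y. {v,y} \<in> E} = {u}"
  proof
    show "{u} \<subseteq> {y. {v,y} \<in> E}" using uv by (simp add: insert_commute)
  next
    show "{y. {v,y} \<in> E} \<subseteq> {u}"
    proof
      fix w assume "w \<in> {y. {v,y} \<in> E}"
      then have vw: "{v,w} \<in> E" by simp
      have wX: "w \<in> X" and wv: "w \<noteq> v" using edge_in[OF sg vw] by auto
      show "w \<in> {u}"
      proof (rule ccontr)
        assume wu: "w \<notin> {u}"
        show False
        proof (cases "w \<in> set p")
          case False
          have "p @ [w] \<in> P" using pd False wX vw p unfolding P_def
            by (auto simp: successively_append_iff)
          then have "length (p @ [w]) \<le> length p" by (rule maxp)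
          then show False by simp
        next
          case True
          then have "w \<in> set (rev r)" using wu wv p by auto
          then obtain a1 b1 where r: "rev r = a1 @ w # b1" using split_list by metis
          have p2: "p = a1 @ (w # b1 @ [u,v])" using p r by simp
          have s1: "simple_path E (w # b1 @ [u,v]) w v"
            using pd(1,2) unfolding p2 simple_path_alt
            by (auto simp: successively_append_iff)
          have s2: "simple_path E [w,v] w v"
            using vw wv unfolding simple_path_alt by (auto simp: insert_commute)
          have "w # b1 @ [u,v] = [w,v]" using tree_unique[OF t s1 s2] .
          then show False by simp
        qed
      qed
    qed
  qed
  then have nbv: "{y. {v,y} \<in> E} = {u}" .
  show ?thesis
  proof (intro exI conjI)
    show "v \<in> X" by (rule vX)
    show "{y. {v,y} \<in> E} = {u}" by (rule nbv)
  qed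
qed

lemma leaf_not_in_path:
  assumes nb: "{y. {v,y} \<in> E} = {u}" and sp: "simple_path E p a b" and "a \<noteq> v" "b \<noteq> v"
  shows "v \<notin> set p"
proof
  assume "v \<in> set p"
  then obtain p1 p2 where p: "p = p1 @ v # p2" using split_list by metis
  have ne: "p1 \<noteq> []" "p2 \<noteq> []" using sp assms(3,4) unfolding p simple_path_alt by auto
  have w: "walk E (p1 @ v # p2)" using sp unfolding p simple_path_alt by blast
  then have e1: "{last p1, v} \<in> E" and w2: "walk E (v # p2)" using ne by (simp_all add: successively_append_iff)
  have e2: "{v, hd p2} \<in> E" using w2 ne by (cases p2) auto
  have "{v, last p1} \<in> E" using e1 by (simp add: insert_commute)
  then have "last p1 \<in> {y. {v,y} \<in> E}" by simp
  then have l1: "last p1 = u" unfolding nb by simp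
  have "hd p2 \<in> {y. {v,y} \<in> E}" using e2 by simp
  then have h2: "hd p2 = u" unfolding nb by simp
  have "distinct (p1 @ v # p2)" using sp unfolding p simple_path_alt by blast
  then have "set p1 \<inter> set p2 = {}" by auto
  moreover have "last p1 \<in> set p1" "hd p2 \<in> set p2" using ne by auto
  ultimately show False using l1 h2 by auto
qed

definition remE :: "'a set set \<Rightarrow> 'a \<Rightarrow> 'a set set" where
  "remE E v = {e\<in>E. v \<notin> e}"

lemma walk_remE: "walk E p \<Longrightarrow> v \<notin> set p \<Longrightarrow> walk (remE E v) p"
  unfolding remE_def by (erule successively_mono) auto

lemma walk_sub: "walk (remE E v) p \<Longrightarrow> walk E p"
  unfolding remE_def by (erule successively_mono) auto

lemma tree_remove_leaf:
  assumes t: "is_tree X E" and vX: "v \<in> X" and nb: "{y. {v,y} \<in> E} = {u}"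
  shows "is_tree (X - {v}) (remE E v)"
proof -
  have sg: "simple_graph X E" using t unfolding is_tree_def by simp
  have "u \<in> {y. {v,y} \<in> E}" unfolding nb by simp
  then have uv: "{v,u} \<in> E" by simp
  then have u: "u \<in> X" "u \<noteq> v" using edge_in[OF sg] by auto
  have "simple_graph (X - {v}) (remE E v)"
    unfolding simple_graph_def
  proof (intro conjI ballI)
    show "finite (X - {v})" using sg unfolding simple_graph_def by simp
    fix e assume "e \<in> remE E v"
    then have e: "e \<in> E" "v \<notin> e" unfolding remE_def by auto
    then obtain a b where ab: "e = {a,b}" "a \<in> X" "b \<in> X" "a \<noteq> b"
      using sg unfolding simple_graph_def by blast
    then have "a \<noteq> v" "b \<noteq> v" using e(2) by auto
    then show "\<exists>a b. e = {a, b} \<and> a \<in> X - {v} \<and> b \<in> X - {v} \<and> a \<noteq> b"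
      using ab by blast
  qed
  moreover have "X - {v} \<noteq> {}" using u by auto
  moreover have "\<forall>a\<in>X - {v}. \<forall>b\<in>X - {v}. \<exists>p. simple_path (remE E v) p a b"
  proof (intro ballI)
    fix a b assume a: "a \<in> X - {v}" and b: "b \<in> X - {v}"
    obtain p where sp: "simple_path E p a b" using tree_path_exists[OF t] a b by blast
    have "v \<notin> set p" using leaf_not_in_path[OF nb sp] a b by auto
    then have "walk (remE E v) p" using walk_remE[of E p v] sp by (simp add: simple_path_alt)
    then have "simple_path (remE E v) p a b" using sp by (simp add: simple_path_alt)
    then show "\<exists>p. simple_path (remE E v) p a b" by blast
  qed
  moreover have "\<nexists>c. is_cycle (remE E v) c"
  proof
    assume "\<exists>c. is_cycle (remE E v) c"
    then obtain c where "is_cycle (remE E v) c" by blast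
    then have "length c \<ge> 3 \<and> distinct c \<and> walk (remE E v) c \<and> {last c, hd c} \<in> remE E v"
      unfolding is_cycle_alt by blast
    then have "is_cycle E c" unfolding is_cycle_alt using walk_sub[of E v c] by (simp add: remE_def)
    then show False using t unfolding is_tree_def by blast
  qed
  ultimately show ?thesis unfolding is_tree_def by blast
qed

lemma dist_remove:
  assumes t: "is_tree X E" and vX: "v \<in> X" and nb: "{y. {v,y} \<in> E} = {u}"
    and a: "a \<in> X - {v}" and b: "b \<in> X - {v}"
  shows "tree_dist (remE E v) l a b = tree_dist E l a b"
proof -
  obtain p where sp: "simple_path E p a b" using tree_path_exists[OF t] a b by blast
  have "v \<notin> set p" using leaf_not_in_path[OF nb sp] a b by auto
  then have "walk (remE E v) p" using walk_remE[of E p v] sp by (simp add: simple_path_alt)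
  then have sp': "simple_path (remE E v) p a b" using sp by (simp add: simple_path_alt)
  show ?thesis using tree_dist_eq[OF t sp] tree_dist_eq[OF tree_remove_leaf[OF t vX nb] sp'] by simp
qed

lemma dist_leaf:
  assumes t: "is_tree X E" and vX: "v \<in> X" and nb: "{y. {v,y} \<in> E} = {u}"
    and z: "z \<in> X - {v}"
  shows "tree_dist E l v z = l {u,v} + tree_dist E l u z"
proof -
  have sg: "simple_graph X E" using t unfolding is_tree_def by simp
  have "u \<in> {y. {v,y} \<in> E}" unfolding nb by simp
  then have uv: "{v,u} \<in> E" by simp
  then have u: "u \<in> X" "u \<noteq> v" using edge_in[OF sg] by auto
  obtain p where sp: "simple_path E p u z" using tree_path_exists[OF t] u z by blast
  have "v \<notin> set p" using leaf_not_in_path[OF nb sp] u z by auto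
  then have sp': "simple_path E (v # p) v z" using sp uv unfolding simple_path_alt
    by (auto simp: successively_Cons)
  have "path_length l (v # p) = l {v, u} + path_length l p"
    using sp path_length_Cons[of p l v] unfolding simple_path_alt by auto
  then show ?thesis using tree_dist_eq[OF t sp] tree_dist_eq[OF t sp'] by (simp add: insert_commute)
qed

lemma qf_insert:
  fixes Z :: "'a \<Rightarrow> 'a \<Rightarrow> real"
  assumes "finite S" "v \<notin> S" "\<And>a. a \<in> S \<Longrightarrow> Z a v = Z v a"
  shows "(\<Sum>a\<in>insert v S. \<Sum>b\<in>insert v S. Z a b * w a * w b)
       = (\<Sum>a\<in>S. \<Sum>b\<in>S. Z a b * w a * w b) + 2 * w v * (\<Sum>b\<in>S. Z v b * w b) + Z v v * (w v)^2"
proof -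
  have "(\<Sum>a\<in>insert v S. \<Sum>b\<in>insert v S. Z a b * w a * w b)
     = (\<Sum>b\<in>insert v S. Z v b * w v * w b) + (\<Sum>a\<in>S. Z a v * w a * w v + (\<Sum>b\<in>S. Z a b * w a * w b))"
    using assms(1,2) by simp
  also have "\<dots> = Z v v * (w v)^2 + w v * (\<Sum>b\<in>S. Z v b * w b) + (\<Sum>a\<in>S. Z a v * w a * w v) + (\<Sum>a\<in>S. \<Sum>b\<in>S. Z a b * w a * w b)"
    using assms(1,2) by (simp add: sum.distrib sum_distrib_left power2_eq_square algebra_simps)
  also have "(\<Sum>a\<in>S. Z a v * w a * w v) = w v * (\<Sum>b\<in>S. Z v b * w b)"
    using assms(3) by (simp add: sum_distrib_left algebra_simps)
  finally show ?thesis by simp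
qed

lemma qf_shift:
  fixes Z :: "'a \<Rightarrow> 'a \<Rightarrow> real"
  assumes fS: "finite S" and uS: "u \<in> S" and sym: "\<And>a. a \<in> S \<Longrightarrow> Z a u = Z u a"
  shows "(\<Sum>a\<in>S. \<Sum>b\<in>S. Z a b * (w a + (if a = u then c else 0)) * (w b + (if b = u then c else 0)))
       = (\<Sum>a\<in>S. \<Sum>b\<in>S. Z a b * w a * w b) + 2 * c * (\<Sum>b\<in>S. Z u b * w b) + c^2 * Z u u"
proof -
  have e: "Z a b * (w a + (if a = u then c else 0)) * (w b + (if b = u then c else 0))
      = Z a b * w a * w b + (if b = u then Z a u * w a * c else 0) + (if a = u then Z u b * w b * c else 0)
        + (if a = u \<and> b = u then Z u u * c^2 else 0)" for a b
    by (auto simp: algebra_simps power2_eq_square)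
  have "(\<Sum>a\<in>S. \<Sum>b\<in>S. Z a b * (w a + (if a = u then c else 0)) * (w b + (if b = u then c else 0)))
      = (\<Sum>a\<in>S. \<Sum>b\<in>S. Z a b * w a * w b) + (\<Sum>a\<in>S. Z a u * w a * c) + (\<Sum>b\<in>S. Z u b * w b * c) + Z u u * c^2"
  proof -
    have d1: "(\<Sum>a\<in>S. \<Sum>b\<in>S. (if b = u then Z a u * w a * c else 0)) = (\<Sum>a\<in>S. Z a u * w a * c)"
      using fS uS by simp
    have d2: "(\<Sum>a\<in>S. \<Sum>b\<in>S. (if a = u then Z u b * w b * c else 0)) = (\<Sum>b\<in>S. Z u b * w b * c)"
      using fS uS by (subst sum.swap) simp
    have d3: "(\<Sum>a\<in>S. \<Sum>b\<in>S. (if a = u \<and> b = u then Z u u * c^2 else 0)) = Z u u * c^2"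
    proof -
      have "(\<Sum>a\<in>S. \<Sum>b\<in>S. (if a = u \<and> b = u then Z u u * c^2 else 0))
          = (\<Sum>a\<in>S. (if a = u then Z u u * c^2 else 0))"
        using fS uS by (intro sum.cong) auto
      also have "\<dots> = Z u u * c^2" using fS uS by simp
      finally show ?thesis .
    qed
    show ?thesis unfolding e sum.distrib d1 d2 d3 by simp
  qed
  also have "(\<Sum>a\<in>S. Z a u * w a * c) = (\<Sum>b\<in>S. Z u b * w b * c)"
    using sym by (intro sum.cong) auto
  finally show ?thesis by (simp add: sum_distrib_left sum_distrib_right algebra_simps)
qed


lemma pd_tree:
  assumes "is_tree X E" "\<forall>e\<in>E. l e > 0" "\<exists>a\<in>X. w a \<noteq> 0"
  shows "(\<Sum>a\<in>X. \<Sum>b\<in>X. exp (- tree_dist E l a b) * w a * w b) > 0"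
  using assms
proof (induction "card X" arbitrary: X E w rule: less_induct)
  case less
  note t = less.prems(1) and lpos = less.prems(2) and nz = less.prems(3)
  have sg: "simple_graph X E" and fX: "finite X" and Xne: "X \<noteq> {}"
    using t unfolding is_tree_def simple_graph_def by auto
  show ?case
  proof (cases "card X \<ge> 2")
    case False
    then have "card X = 1" using fX Xne by (metis One_nat_def card_0_eq less_2_cases not_le)
    then obtain a where X: "X = {a}" using card_1_singletonE by blast
    have "w a \<noteq> 0" using nz X by simp
    then show ?thesis using tree_dist_self[OF t] X by (auto simp: zero_less_mult_iff linorder_neq_iff)
  next
    case True
    obtain v u where vX: "v \<in> X" and nb: "{y. {v,y} \<in> E} = {u}" using tree_leaf[OF t True] by blast
    have "u \<in> {y. {v,y} \<in> E}" unfolding nb by simp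
    then have uv: "{v,u} \<in> E" by simp
    then have uX: "u \<in> X" and uv': "u \<noteq> v" using edge_in[OF sg] by auto
    define X' where "X' = X - {v}"
    define E' where "E' = remE E v"
    have t': "is_tree X' E'" unfolding X'_def E'_def by (rule tree_remove_leaf[OF t vX nb])
    have lpos': "\<forall>e\<in>E'. l e > 0" using lpos unfolding E'_def remE_def by auto
    have cX': "card X' < card X" unfolding X'_def using fX vX by (meson card_Diff1_less)
    have fX': "finite X'" and vX': "v \<notin> X'" and uX': "u \<in> X'" and XX: "X = insert v X'"
      using fX vX uX uv' unfolding X'_def by auto
    define Z where "Z a b = exp (- tree_dist E l a b)" for a b
    define q where "q = exp (- l {u,v})"
    have luv: "l {u,v} > 0" using lpos uv by (simp add: insert_commute)
    have q1: "q < 1" "q > 0" unfolding q_def using luv by auto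
    have Zsym: "Z a b = Z b a" if "a \<in> X" "b \<in> X" for a b
      unfolding Z_def using tree_dist_sym[OF t that] by simp
    have Zvb: "Z v b = q * Z u b" if "b \<in> X'" for b
      unfolding Z_def q_def using dist_leaf[OF t vX nb, of b l] that unfolding X'_def
      by (simp add: exp_add[symmetric])
    have Zvv: "Z v v = 1" and Zuu: "Z u u = 1" unfolding Z_def using tree_dist_self[OF t] by auto
    have Z': "exp (- tree_dist E' l a b) = Z a b" if "a \<in> X'" "b \<in> X'" for a b
      unfolding Z_def E'_def using dist_remove[OF t vX nb] that unfolding X'_def by simp
    define w' where "w' a = w a + (if a = u then q * w v else 0)" for a
    define Q' where "Q' = (\<Sum>a\<in>X'. \<Sum>b\<in>X'. exp (- tree_dist E' l a b) * w' a * w' b)"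
    have Q'ge: "Q' \<ge> 0"
    proof (cases "\<exists>a\<in>X'. w' a \<noteq> 0")
      case True
      then show ?thesis using less.hyps[OF cX' t' lpos' True] unfolding Q'_def by simp
    next
      case False
      then show ?thesis unfolding Q'_def by simp
    qed
    have Q'eq: "Q' = (\<Sum>a\<in>X'. \<Sum>b\<in>X'. Z a b * w a * w b) + 2 * (q * w v) * (\<Sum>b\<in>X'. Z u b * w b) + (q * w v)^2"
    proof -
      have "Q' = (\<Sum>a\<in>X'. \<Sum>b\<in>X'. Z a b * (w a + (if a = u then q * w v else 0)) * (w b + (if b = u then q * w v else 0)))"
        unfolding Q'_def w'_def using Z' by (intro sum.cong refl) simp
      also have "\<dots> = (\<Sum>a\<in>X'. \<Sum>b\<in>X'. Z a b * w a * w b) + 2 * (q * w v) * (\<Sum>b\<in>X'. Z u b * w b) + (q * w v)^2 * Z u u"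
        by (rule qf_shift[OF fX' uX']) (use Zsym uX XX in auto)
      finally show ?thesis using Zuu by simp
    qed
    have Qeq: "(\<Sum>a\<in>X. \<Sum>b\<in>X. Z a b * w a * w b) = (\<Sum>a\<in>X'. \<Sum>b\<in>X'. Z a b * w a * w b) + 2 * w v * (\<Sum>b\<in>X'. Z v b * w b) + Z v v * (w v)^2"
      unfolding XX by (rule qf_insert[OF fX' vX']) (use Zsym vX XX in auto)
    have "(\<Sum>b\<in>X'. Z v b * w b) = q * (\<Sum>b\<in>X'. Z u b * w b)"
      using Zvb by (simp add: sum_distrib_left mult.assoc)
    then have key: "(\<Sum>a\<in>X. \<Sum>b\<in>X. Z a b * w a * w b) = Q' + (1 - q^2) * (w v)^2"
      using Qeq Q'eq Zvv by (simp add: algebra_simps power2_eq_square)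
    have "(\<Sum>a\<in>X. \<Sum>b\<in>X. Z a b * w a * w b) > 0"
    proof (cases "w v = 0")
      case False
      have "(1 - q^2) * (w v)^2 > 0" using q1 False by (simp add: power_less_one_iff abs_less_iff)
      then show ?thesis using key Q'ge by linarith
    next
      case True
      then have ww: "w' a = w a" for a unfolding w'_def by simp
      have "\<exists>a\<in>X'. w' a \<noteq> 0" using nz True XX ww by auto
      then have "Q' > 0" using less.hyps[OF cX' t' lpos'] unfolding Q'_def by simp
      then show ?thesis using key True by simp
    qed
    then show ?thesis unfolding Z_def .
  qed
qed

lemma coord_cont: "continuous_on S (\<lambda>f::'a \<Rightarrow> real. f i)"
  by (rule continuous_on_subset[OF continuous_on_product_coordinates]) simp

lemma simplex_compact:
  assumes fX: "finite X"
  shows "compact {\<mu>::'a \<Rightarrow> real. prob_on X \<mu>}"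
proof -
  define K where "K x = (if x \<in> X then {0..1} else {0::real})" for x
  have cK: "compact (PiE UNIV K)"
  proof -
    have "compactin (product_topology (\<lambda>_. euclidean) UNIV) (PiE UNIV K)"
      unfolding compactin_PiE by (auto simp: K_def)
    then show ?thesis by (simp add: euclidean_product_topology)
  qed
  have cl: "closed {\<mu>::'a \<Rightarrow> real. (\<Sum>x\<in>X. \<mu> x) = 1}"
    by (rule closed_Collect_eq) (intro continuous_on_sum coord_cont, rule continuous_on_const)
  have eq: "{\<mu>::'a \<Rightarrow> real. prob_on X \<mu>} = PiE UNIV K \<inter> {\<mu>. (\<Sum>x\<in>X. \<mu> x) = 1}"
  proof (intro set_eqI iffI)
    fix \<mu> :: "'a \<Rightarrow> real" assume "\<mu> \<in> {\<mu>. prob_on X \<mu>}"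
    then have p: "prob_on X \<mu>" by simp
    have "\<mu> x \<le> 1" if "x \<in> X" for x
    proof -
      have "\<mu> x \<le> (\<Sum>y\<in>X. \<mu> y)" using p that fX unfolding prob_on_def
        by (intro member_le_sum) auto
      then show ?thesis using p unfolding prob_on_def by simp
    qed
    moreover have "\<mu> x \<ge> 0" if "x \<in> X" for x using p that unfolding prob_on_def by blast
    moreover have "\<mu> x = 0" if "x \<notin> X" for x using p that unfolding prob_on_def by blast
    ultimately have "\<mu> x \<in> K x" for x unfolding K_def by (cases "x \<in> X") auto
    moreover have "(\<Sum>x\<in>X. \<mu> x) = 1" using p unfolding prob_on_def by blast
    ultimately show "\<mu> \<in> PiE UNIV K \<inter> {\<mu>. (\<Sum>x\<in>X. \<mu> x) = 1}"
      by (simp add: PiE_iff)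
  next
    fix \<mu> :: "'a \<Rightarrow> real" assume a: "\<mu> \<in> PiE UNIV K \<inter> {\<mu>. (\<Sum>x\<in>X. \<mu> x) = 1}"
    then have k: "\<mu> x \<in> K x" for x by (simp add: PiE_iff)
    have "\<mu> x \<ge> 0" if "x \<in> X" for x using k[of x] that unfolding K_def by simp
    moreover have "\<mu> x = 0" if "x \<notin> X" for x using k[of x] that unfolding K_def by simp
    moreover have "(\<Sum>x\<in>X. \<mu> x) = 1" using a by simp
    ultimately show "\<mu> \<in> {\<mu>. prob_on X \<mu>}" unfolding prob_on_def by blast
  qed
  show ?thesis unfolding eq using cK cl by blast
qed

lemma min_exists:
  assumes fX: "finite X" and ne: "X \<noteq> {}"
  shows "\<exists>\<mu>. prob_on X \<mu> \<and> (\<forall>\<nu>. prob_on X \<nu> \<longrightarrow> similarity_form X E l \<mu> \<le> similarity_form X E l \<nu>)"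
proof -
  obtain a where a: "a \<in> X" using ne by blast
  have "prob_on X (\<lambda>x. if x = a then 1 else 0)" unfolding prob_on_def using a fX by simp
  then have sne: "{\<mu>::'a \<Rightarrow> real. prob_on X \<mu>} \<noteq> {}" by blast
  have ct: "continuous_on {\<mu>::'a \<Rightarrow> real. prob_on X \<mu>} (similarity_form X E l)"
    unfolding similarity_form_def by (intro continuous_on_sum continuous_on_mult continuous_on_const coord_cont)
  show ?thesis using continuous_attains_inf[OF simplex_compact[OF fX] sne ct] by auto
qed

lemma midpoint_identity:
  fixes Z :: "'a \<Rightarrow> 'a \<Rightarrow> real"
  shows "(\<Sum>a\<in>X. \<Sum>b\<in>X. Z a b * ((\<mu> a + \<nu> a) / 2) * ((\<mu> b + \<nu> b) / 2))
    = ((\<Sum>a\<in>X. \<Sum>b\<in>X. Z a b * \<mu> a * \<mu> b) + (\<Sum>a\<in>X. \<Sum>b\<in>X. Z a b * \<nu> a * \<nu> b)) / 2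
      - (\<Sum>a\<in>X. \<Sum>b\<in>X. Z a b * (\<mu> a - \<nu> a) * (\<mu> b - \<nu> b)) / 4"
proof -
  have "(\<Sum>a\<in>X. \<Sum>b\<in>X. Z a b * ((\<mu> a + \<nu> a) / 2) * ((\<mu> b + \<nu> b) / 2))
      = (\<Sum>a\<in>X. \<Sum>b\<in>X. (Z a b * \<mu> a * \<mu> b + Z a b * \<nu> a * \<nu> b) / 2 - Z a b * (\<mu> a - \<nu> a) * (\<mu> b - \<nu> b) / 4)"
    by (intro sum.cong refl) (simp add: field_simps)
  also have "\<dots> = ((\<Sum>a\<in>X. \<Sum>b\<in>X. Z a b * \<mu> a * \<mu> b) + (\<Sum>a\<in>X. \<Sum>b\<in>X. Z a b * \<nu> a * \<nu> b)) / 2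
      - (\<Sum>a\<in>X. \<Sum>b\<in>X. Z a b * (\<mu> a - \<nu> a) * (\<mu> b - \<nu> b)) / 4"
    by (simp only: sum_subtractf sum_divide_distrib[symmetric] sum.distrib)
  finally show ?thesis .
qed

lemma min_unique:
  assumes t: "is_tree X E" and lpos: "\<forall>e\<in>E. l e > 0"
    and m1: "prob_on X \<mu> \<and> (\<forall>\<nu>'. prob_on X \<nu>' \<longrightarrow> similarity_form X E l \<mu> \<le> similarity_form X E l \<nu>')"
    and m2: "prob_on X \<nu> \<and> (\<forall>\<nu>'. prob_on X \<nu>' \<longrightarrow> similarity_form X E l \<nu> \<le> similarity_form X E l \<nu>')"
  shows "\<mu> = \<nu>"
proof (rule ccontr)
  assume ne: "\<mu> \<noteq> \<nu>"
  then obtain a where a: "\<mu> a \<noteq> \<nu> a" by blast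
  have pm: "prob_on X \<mu>" and pn: "prob_on X \<nu>" using m1 m2 by blast+
  have aX: "a \<in> X"
  proof (rule ccontr)
    assume "a \<notin> X"
    then have "\<mu> a = 0" "\<nu> a = 0" using pm pn unfolding prob_on_def by blast+
    then show False using a by simp
  qed
  define \<rho> where "\<rho> x = (\<mu> x + \<nu> x) / 2" for x
  have p\<rho>: "prob_on X \<rho>" unfolding prob_on_def
  proof (intro conjI allI ballI impI)
    fix x assume "x \<in> X"
    then have "\<mu> x \<ge> 0" "\<nu> x \<ge> 0" using pm pn unfolding prob_on_def by blast+
    then show "\<rho> x \<ge> 0" unfolding \<rho>_def by simp
  next
    fix x assume "x \<notin> X"
    then have "\<mu> x = 0" "\<nu> x = 0" using pm pn unfolding prob_on_def by blast+
    then show "\<rho> x = 0" unfolding \<rho>_def by simp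
  next
    have "(\<Sum>x\<in>X. \<mu> x) = 1" "(\<Sum>x\<in>X. \<nu> x) = 1" using pm pn unfolding prob_on_def by blast+
    then show "(\<Sum>x\<in>X. \<rho> x) = 1" unfolding \<rho>_def
      by (simp add: sum.distrib sum_divide_distrib[symmetric])
  qed
  have l1: "similarity_form X E l \<mu> \<le> similarity_form X E l \<nu>" using m1 pn by blast
  have l2: "similarity_form X E l \<nu> \<le> similarity_form X E l \<mu>" using m2 pm by blast
  have l3: "similarity_form X E l \<mu> \<le> similarity_form X E l \<rho>" using m1 p\<rho> by blast
  have "\<exists>a\<in>X. (\<lambda>x. \<mu> x - \<nu> x) a \<noteq> 0" using aX a by auto
  then have pos: "(\<Sum>a\<in>X. \<Sum>b\<in>X. exp (- tree_dist E l a b) * (\<mu> a - \<nu> a) * (\<mu> b - \<nu> b)) > 0"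
    using pd_tree[OF t lpos, of "\<lambda>x. \<mu> x - \<nu> x"] by simp
  have "similarity_form X E l \<rho> = (similarity_form X E l \<mu> + similarity_form X E l \<nu>) / 2
      - (\<Sum>a\<in>X. \<Sum>b\<in>X. exp (- tree_dist E l a b) * (\<mu> a - \<nu> a) * (\<mu> b - \<nu> b)) / 4"
    unfolding similarity_form_def \<rho>_def by (rule midpoint_identity)
  then have "similarity_form X E l \<rho> < similarity_form X E l \<mu>" using l1 l2 pos by simp
  then show False using l3 by simp
qed

lemma maxdiv_is_min:
  assumes "weighted_tree X E l"
  shows "prob_on X (maxdiv_measure X E l) \<and>
     (\<forall>\<nu>. prob_on X \<nu> \<longrightarrow> similarity_form X E l (maxdiv_measure X E l) \<le> similarity_form X E l \<nu>)"
proof -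
  have t: "is_tree X E" and lpos: "\<forall>e\<in>E. l e > 0" using assms unfolding weighted_tree_def by auto
  have fX: "finite X" and ne: "X \<noteq> {}" using t unfolding is_tree_def simple_graph_def by auto
  have "\<exists>!\<mu>. prob_on X \<mu> \<and> (\<forall>\<nu>. prob_on X \<nu> \<longrightarrow> similarity_form X E l \<mu> \<le> similarity_form X E l \<nu>)"
    by (rule ex_ex1I[OF min_exists[OF fX ne]]) (rule min_unique[OF t lpos])
  then show ?thesis unfolding maxdiv_measure_def by (rule theI')
qed

lemma hsum:
  fixes G :: "'a \<Rightarrow> real"
  assumes "finite X" "x \<in> X" "y \<in> X"
  shows "(\<Sum>a\<in>X. ((if a = y then 1 else 0) - (if a = x then 1 else 0)) * G a) = G y - G x"
proof -
  have "(\<Sum>a\<in>X. ((if a = y then 1 else 0) - (if a = x then 1 else 0)) * G a)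
      = (\<Sum>a\<in>X. (if a = y then G a else 0)) - (\<Sum>a\<in>X. (if a = x then G a else 0))"
    unfolding sum_subtractf[symmetric] by (intro sum.cong refl) auto
  also have "\<dots> = G y - G x" using assms by simp
  finally show ?thesis .
qed

lemma kkt:
  fixes Z :: "'a \<Rightarrow> 'a \<Rightarrow> real"
  assumes fX: "finite X" and sym: "\<And>a b. a \<in> X \<Longrightarrow> b \<in> X \<Longrightarrow> Z a b = Z b a"
    and p\<mu>: "prob_on X \<mu>"
    and min\<mu>: "\<forall>\<nu>. prob_on X \<nu> \<longrightarrow> (\<Sum>a\<in>X. \<Sum>b\<in>X. Z a b * \<mu> a * \<mu> b) \<le> (\<Sum>a\<in>X. \<Sum>b\<in>X. Z a b * \<nu> a * \<nu> b)"
    and xX: "x \<in> X" and yX: "y \<in> X" and mx: "\<mu> x > 0"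
  shows "(\<Sum>b\<in>X. Z x b * \<mu> b) \<le> (\<Sum>b\<in>X. Z y b * \<mu> b)"
proof (cases "y = x")
  case True then show ?thesis by simp
next
  case yx: False
  define h where "h a = (if a = y then 1 else 0) - (if a = x then (1::real) else 0)" for a
  define F where "F a = (\<Sum>b\<in>X. Z a b * \<mu> b)" for a
  define D where "D = F y - F x"
  define C where "C = (\<Sum>a\<in>X. \<Sum>b\<in>X. Z a b * h a * h b)"
  define Q\<mu> where "Q\<mu> = (\<Sum>a\<in>X. \<Sum>b\<in>X. Z a b * \<mu> a * \<mu> b)"
  have hs: "(\<Sum>a\<in>X. h a * G a) = G y - G x" for G :: "'a \<Rightarrow> real"
    unfolding h_def by (rule hsum[OF fX xX yX])
  have s1: "(\<Sum>a\<in>X. \<Sum>b\<in>X. Z a b * h a * \<mu> b) = D"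
  proof -
    have "(\<Sum>a\<in>X. \<Sum>b\<in>X. Z a b * h a * \<mu> b) = (\<Sum>a\<in>X. h a * F a)"
      unfolding F_def by (simp add: sum_distrib_left mult_ac)
    then show ?thesis using hs[of F] unfolding D_def by simp
  qed
  have s2: "(\<Sum>a\<in>X. \<Sum>b\<in>X. Z a b * \<mu> a * h b) = D"
  proof -
    have "(\<Sum>a\<in>X. \<Sum>b\<in>X. Z a b * \<mu> a * h b) = (\<Sum>b\<in>X. \<Sum>a\<in>X. Z a b * \<mu> a * h b)"
      by (rule sum.swap)
    also have "\<dots> = (\<Sum>b\<in>X. h b * F b)"
      unfolding F_def by (intro sum.cong refl) (simp add: sum_distrib_left mult_ac sym)
    finally show ?thesis using hs[of F] unfolding D_def by simp
  qed
  have pert: "(\<Sum>a\<in>X. \<Sum>b\<in>X. Z a b * (\<mu> a + e * h a) * (\<mu> b + e * h b)) = Q\<mu> + 2 * e * D + e^2 * C" for e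
  proof -
    have "(\<Sum>a\<in>X. \<Sum>b\<in>X. Z a b * (\<mu> a + e * h a) * (\<mu> b + e * h b))
        = (\<Sum>a\<in>X. \<Sum>b\<in>X. Z a b * \<mu> a * \<mu> b + e * (Z a b * \<mu> a * h b) + e * (Z a b * h a * \<mu> b) + e^2 * (Z a b * h a * h b))"
      by (intro sum.cong refl) (simp add: algebra_simps power2_eq_square)
    also have "\<dots> = Q\<mu> + e * (\<Sum>a\<in>X. \<Sum>b\<in>X. Z a b * \<mu> a * h b) + e * (\<Sum>a\<in>X. \<Sum>b\<in>X. Z a b * h a * \<mu> b) + e^2 * C"
      unfolding Q\<mu>_def C_def by (simp only: sum.distrib sum_distrib_left)
    finally show ?thesis using s1 s2 by simp
  qed
  have ineq: "0 \<le> 2 * D + e * C" if e0: "0 < e" and e1: "e \<le> \<mu> x" for e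
  proof -
    define \<nu> where "\<nu> a = \<mu> a + e * h a" for a
    have p\<nu>: "prob_on X \<nu>" unfolding prob_on_def
    proof (intro conjI allI ballI impI)
      fix a assume aX: "a \<in> X"
      have "\<mu> a \<ge> 0" using p\<mu> aX unfolding prob_on_def by blast
      then show "\<nu> a \<ge> 0" unfolding \<nu>_def h_def using e0 e1 yx by auto
    next
      fix a assume aX: "a \<notin> X"
      then have "\<mu> a = 0" "a \<noteq> x" "a \<noteq> y" using p\<mu> xX yX unfolding prob_on_def by auto
      then show "\<nu> a = 0" unfolding \<nu>_def h_def by simp
    next
      have "(\<Sum>a\<in>X. h a) = 0" using hs[of "\<lambda>_. 1"] by simp
      then show "(\<Sum>a\<in>X. \<nu> a) = 1" using p\<mu> unfolding \<nu>_def prob_on_def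
        by (simp add: sum.distrib sum_distrib_left[symmetric])
    qed
    have "Q\<mu> \<le> Q\<mu> + 2 * e * D + e^2 * C"
      using min\<mu> p\<nu> pert[of e] unfolding Q\<mu>_def \<nu>_def by auto
    then have "0 \<le> e * (2 * D + e * C)" by (simp add: algebra_simps power2_eq_square)
    then show ?thesis using e0 by (simp add: zero_le_mult_iff)
  qed
  have "D \<ge> 0"
  proof (rule ccontr)
    assume "\<not> D \<ge> 0"
    then have Dn: "D < 0" by simp
    define e where "e = min (\<mu> x) (- D / (\<bar>C\<bar> + 1))"
    have "- D / (\<bar>C\<bar> + 1) > 0" using Dn by (intro divide_pos_pos) auto
    then have e0: "e > 0" unfolding e_def using mx by simp
    have e1: "e \<le> \<mu> x" unfolding e_def by simp
    have "e * C \<le> e * \<bar>C\<bar>" using e0 by (simp add: mult_left_mono)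
    also have "\<dots> \<le> (- D / (\<bar>C\<bar> + 1)) * \<bar>C\<bar>" unfolding e_def by (intro mult_right_mono) auto
    also have "\<dots> < - D"
    proof -
      have "(- D / (\<bar>C\<bar> + 1)) * \<bar>C\<bar> = - D * (\<bar>C\<bar> / (\<bar>C\<bar> + 1))" by simp
      also have "\<dots> < - D * 1" using Dn by (intro mult_strict_left_mono) auto
      finally show ?thesis by simp
    qed
    finally have "2 * D + e * C < 0" using Dn by simp
    then show False using ineq[OF e0 e1] by simp
  qed
  then show ?thesis unfolding D_def F_def by simp
qed

lemma edges_at:
  assumes sg: "simple_graph X E"
  shows "{e\<in>E. x \<in> e} = (\<lambda>y. {x,y}) ` {y. {x,y} \<in> E}"
    and "inj_on (\<lambda>y. {x,y}) {y. {x,y} \<in> E}"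
proof -
  show "{e\<in>E. x \<in> e} = (\<lambda>y. {x,y}) ` {y. {x,y} \<in> E}"
  proof (intro set_eqI iffI)
    fix e assume "e \<in> {e\<in>E. x \<in> e}"
    then have e: "e \<in> E" "x \<in> e" by auto
    then obtain a b where ab: "e = {a,b}" using sg unfolding simple_graph_def by blast
    show "e \<in> (\<lambda>y. {x,y}) ` {y. {x,y} \<in> E}"
    proof (cases "x = a")
      case True
      then show ?thesis using e ab by blast
    next
      case False
      then have "x = b" using e ab by auto
      then have "e = {x,a}" using ab by (simp add: insert_commute)
      then show ?thesis using e by blast
    qed
  next
    fix e assume "e \<in> (\<lambda>y. {x,y}) ` {y. {x,y} \<in> E}"
    then show "e \<in> {e\<in>E. x \<in> e}" by auto
  qed
  show "inj_on (\<lambda>y. {x,y}) {y. {x,y} \<in> E}"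
  proof (rule inj_onI)
    fix y y' assume y: "y \<in> {y. {x,y} \<in> E}" and y': "y' \<in> {y. {x,y} \<in> E}" and eq: "{x,y} = {x,y'}"
    have "x \<noteq> y" using edge_in[OF sg] y by blast
    moreover have "x \<noteq> y'" using edge_in[OF sg] y' by blast
    ultimately show "y = y'" using eq by (auto simp: doubleton_eq_iff)
  qed
qed

lemma part_a:
  assumes wt: "weighted_tree X E l" and xX: "x \<in> X"
    and cond: "(\<Sum>e\<in>{e\<in>E. x \<in> e}. 1 / (1 + exp (- l e))) \<le> real (degree E x) - 1"
  shows "x \<notin> support X (maxdiv_measure X E l)"
proof
  assume xs: "x \<in> support X (maxdiv_measure X E l)"
  have t: "is_tree X E" and lpos: "\<forall>e\<in>E. l e > 0" using wt unfolding weighted_tree_def by auto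
  have sg: "simple_graph X E" and fX: "finite X" using t unfolding is_tree_def simple_graph_def by auto
  define \<mu> where "\<mu> = maxdiv_measure X E l"
  have mm: "prob_on X \<mu> \<and> (\<forall>\<nu>. prob_on X \<nu> \<longrightarrow> similarity_form X E l \<mu> \<le> similarity_form X E l \<nu>)"
    unfolding \<mu>_def by (rule maxdiv_is_min[OF wt])
  have p\<mu>: "prob_on X \<mu>" using mm by blast
  have mx: "\<mu> x > 0" using xs unfolding support_def \<mu>_def by simp
  have \<mu>nn: "\<mu> b \<ge> 0" if "b \<in> X" for b using p\<mu> that unfolding prob_on_def by blast
  define D where "D = tree_dist E l"
  define Z where "Z a b = exp (- D a b)" for a b
  define F where "F a = (\<Sum>b\<in>X. Z a b * \<mu> b)" for a
  have Zsym: "Z a b = Z b a" if "a \<in> X" "b \<in> X" for a b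
    unfolding Z_def D_def using tree_dist_sym[OF t that] by simp
  have min': "\<forall>\<nu>. prob_on X \<nu> \<longrightarrow> (\<Sum>a\<in>X. \<Sum>b\<in>X. Z a b * \<mu> a * \<mu> b) \<le> (\<Sum>a\<in>X. \<Sum>b\<in>X. Z a b * \<nu> a * \<nu> b)"
    using mm unfolding similarity_form_def Z_def D_def by blast
  have KKT: "F x \<le> F y" if "y \<in> X" for y
    unfolding F_def by (rule kkt[OF fX Zsym p\<mu> min' xX that mx])
  define N where "N = {y. {x,y} \<in> E}"
  have NX: "N \<subseteq> X" and xN: "x \<notin> N" unfolding N_def using edge_in[OF sg] by blast+
  have fN: "finite N" using NX fX finite_subset by blast
  define S where "S = (\<Sum>y\<in>N. 1 / (1 + exp (- l {x,y})))"
  have S: "S \<le> real (card N) - 1"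
  proof -
    have "(\<Sum>e\<in>{e\<in>E. x \<in> e}. 1 / (1 + exp (- l e))) = S"
      unfolding S_def N_def edges_at(1)[OF sg] by (rule sum.reindex[OF edges_at(2)[OF sg], unfolded comp_def])
    then show ?thesis using cond unfolding degree_def N_def by simp
  qed
  define P where "P z = (THE p. simple_path E p x z)" for z
  have spP: "simple_path E (P z) x z" if "z \<in> X" for z
  proof -
    have "\<exists>!p. simple_path E p x z"
      using tree_path_exists[OF t xX that] tree_unique[OF t] by blast
    then show ?thesis unfolding P_def by (rule theI')
  qed
  define br where "br z = P z ! 1" for z
  define B where "B y = {z. z \<in> X - {x} \<and> br z = y}" for y
  have Pdec: "\<exists>r. P z = x # r \<and> r \<noteq> [] \<and> hd r = br z \<and> simple_path E r (br z) z" if z: "z \<in> X - {x}" for z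
  proof -
    have sp: "simple_path E (P z) x z" using spP z by blast
    then obtain r where r: "P z = x # r" unfolding simple_path_alt by (cases "P z") auto
    have "r \<noteq> []" using sp z r unfolding simple_path_alt by auto
    moreover have "hd r = br z" using r \<open>r \<noteq> []\<close> unfolding br_def by (cases r) auto
    moreover have "simple_path E r (br z) z" using sp r \<open>r \<noteq> []\<close> \<open>hd r = br z\<close>
      unfolding simple_path_alt by (auto simp: successively_Cons)
    ultimately show ?thesis using r by blast
  qed
  have brN: "br z \<in> N" if z: "z \<in> X - {x}" for z
  proof -
    obtain r where r: "P z = x # r" "r \<noteq> []" "hd r = br z" using Pdec[OF z] by blast
    have "walk E (P z)" using spP z unfolding simple_path_alt by blast
    then have "{x, hd r} \<in> E" using r by (cases r) auto
    then show ?thesis using r unfolding N_def by simp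
  qed
  have F1: "D x z = l {x, br z} + D (br z) z" if z: "z \<in> X - {x}" for z
  proof -
    obtain r where r: "P z = x # r" "r \<noteq> []" "hd r = br z" "simple_path E r (br z) z" using Pdec[OF z] by blast
    have "D x z = path_length l (P z)" unfolding D_def using tree_dist_eq[OF t spP] z by blast
    also have "\<dots> = l {x, br z} + path_length l r" using r path_length_Cons[of r l x] by simp
    also have "path_length l r = D (br z) z" unfolding D_def using tree_dist_eq[OF t r(4)] by simp
    finally show ?thesis .
  qed
  have F2: "D y z = l {x,y} + D x z" if y: "y \<in> N" and z: "z \<in> X" and zB: "z \<notin> B y" for y z
  proof -
    define p where "p = P z"
    have sp: "simple_path E p x z" unfolding p_def using spP z by blast
    have xy: "{x,y} \<in> E" using y unfolding N_def by simp
    have yx: "y \<noteq> x" using xN y by blast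
    have ynp: "y \<notin> set p"
    proof
      assume "y \<in> set p"
      then obtain p1 p2 where pp: "p = p1 @ y # p2" using split_list by metis
      have p1ne: "p1 \<noteq> []" using sp yx unfolding pp simple_path_alt by auto
      have s1: "simple_path E (p1 @ [y]) x y" using sp p1ne unfolding pp simple_path_alt
        by (auto simp: successively_append_iff)
      have s2: "simple_path E [x,y] x y" using xy yx unfolding simple_path_alt by simp
      have "p1 @ [y] = [x,y]" using tree_unique[OF t s1 s2] .
      then have p1: "p1 = [x]" by (cases p1 rule: rev_cases) auto
      have zx: "z \<noteq> x"
      proof
        assume "z = x"
        then have "p = [hd p]" using sp distinct_hd_last unfolding simple_path_alt by metis
        then show False using pp p1 by simp
      qed
      have "br z = y" unfolding br_def using pp p1 p_def by simp
      then have "z \<in> B y" unfolding B_def using z zx by simp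
      then show False using zB by blast
    qed
    have sp2: "simple_path E (y # p) y z" using sp ynp xy unfolding simple_path_alt
      by (cases p) (auto simp: successively_Cons insert_commute)
    have "D y z = path_length l (y # p)" unfolding D_def using tree_dist_eq[OF t sp2] by simp
    also have "\<dots> = l {y, x} + path_length l p" using sp path_length_Cons[of p l y] unfolding simple_path_alt by auto
    also have "path_length l p = D x z" unfolding D_def using tree_dist_eq[OF t sp] by simp
    finally show ?thesis by (simp add: insert_commute)
  qed
  have Fx0: "F x \<ge> 0" unfolding F_def Z_def using \<mu>nn by (intro sum_nonneg) simp
  have Gy: "(\<Sum>b\<in>B y. Z x b * \<mu> b) \<ge> F x * (exp (- l {x,y}) / (1 + exp (- l {x,y})))" if y: "y \<in> N" for y
  proof -
    define q where "q = exp (- l {x,y})"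
    have "l {x,y} > 0" using lpos y unfolding N_def by simp
    then have q0: "q > 0" "q < 1" unfolding q_def by auto
    have BX: "B y \<subseteq> X" unfolding B_def by auto
    define A where "A = (\<Sum>b\<in>B y. Z y b * \<mu> b)"
    define R where "R = (\<Sum>b\<in>X - B y. Z x b * \<mu> b)"
    have c1: "(\<Sum>b\<in>B y. Z x b * \<mu> b) = q * A"
      unfolding A_def sum_distrib_left
    proof (intro sum.cong refl)
      fix b assume b: "b \<in> B y"
      then have "D x b = l {x,y} + D y b" using F1[of b] unfolding B_def by auto
      then show "Z x b * \<mu> b = q * (Z y b * \<mu> b)" unfolding Z_def q_def by (simp add: exp_add[symmetric])
    qed
    have c2: "(\<Sum>b\<in>X - B y. Z y b * \<mu> b) = q * R"
      unfolding R_def sum_distrib_left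
    proof (intro sum.cong refl)
      fix b assume b: "b \<in> X - B y"
      then have "D y b = l {x,y} + D x b" using F2[OF y] by blast
      then show "Z y b * \<mu> b = q * (Z x b * \<mu> b)" unfolding Z_def q_def by (simp add: exp_add[symmetric])
    qed
    have Fx: "F x = R + q * A"
    proof -
      have "F x = (\<Sum>b\<in>X - B y. Z x b * \<mu> b) + (\<Sum>b\<in>B y. Z x b * \<mu> b)"
        unfolding F_def by (rule sum.subset_diff[OF BX fX])
      then show ?thesis using c1 unfolding R_def by simp
    qed
    have Fy: "F y = q * R + A"
    proof -
      have "F y = (\<Sum>b\<in>X - B y. Z y b * \<mu> b) + (\<Sum>b\<in>B y. Z y b * \<mu> b)"
        unfolding F_def by (rule sum.subset_diff[OF BX fX])
      then show ?thesis using c2 unfolding A_def by simp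
    qed
    have "F x \<le> F y" using KKT NX y by blast
    then have "(1 - q) * R \<le> (1 - q) * A" using Fx Fy by (simp add: algebra_simps)
    then have "R \<le> A" using q0 by (simp add: mult_le_cancel_left)
    then have "F x \<le> (1 + q) * A" using Fx by (simp add: algebra_simps)
    then have "F x * (q / (1 + q)) \<le> (1 + q) * A * (q / (1 + q))"
      using q0 by (intro mult_right_mono) auto
    also have "\<dots> = q * A" using q0 by (simp add: field_simps)
    finally show ?thesis using c1 unfolding q_def by simp
  qed
  have "F x = Z x x * \<mu> x + (\<Sum>b\<in>X - {x}. Z x b * \<mu> b)"
    unfolding F_def using sum.remove[OF fX xX] by simp
  also have "Z x x = 1" unfolding Z_def D_def using tree_dist_self[OF t] by simp
  also have "(\<Sum>b\<in>X - {x}. Z x b * \<mu> b) = (\<Sum>y\<in>N. \<Sum>b\<in>B y. Z x b * \<mu> b)"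
  proof -
    have im: "br ` (X - {x}) \<subseteq> N" using brN by blast
    have "(\<Sum>y\<in>N. \<Sum>b\<in>{z. z \<in> X - {x} \<and> br z = y}. Z x b * \<mu> b) = (\<Sum>b\<in>X - {x}. Z x b * \<mu> b)"
      by (rule sum.group[OF _ fN im]) (use fX in simp)
    then show ?thesis unfolding B_def by simp
  qed
  finally have Fxe: "F x = \<mu> x + (\<Sum>y\<in>N. \<Sum>b\<in>B y. Z x b * \<mu> b)" by simp
  have "(\<Sum>y\<in>N. F x * (exp (- l {x,y}) / (1 + exp (- l {x,y})))) \<le> (\<Sum>y\<in>N. \<Sum>b\<in>B y. Z x b * \<mu> b)"
    using Gy by (intro sum_mono) auto
  moreover have "(\<Sum>y\<in>N. F x * (exp (- l {x,y}) / (1 + exp (- l {x,y})))) = F x * (real (card N) - S)"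
  proof -
    have "(\<Sum>y\<in>N. F x * (exp (- l {x,y}) / (1 + exp (- l {x,y}))))
        = (\<Sum>y\<in>N. F x * (1 - 1 / (1 + exp (- l {x,y}))))"
    proof (intro sum.cong refl)
      fix y
      have "1 + exp (- l {x,y}) > 0" by (simp add: add_pos_pos)
      then have "exp (- l {x,y}) / (1 + exp (- l {x,y})) = 1 - 1 / (1 + exp (- l {x,y}))"
        by (simp add: field_simps)
      then show "F x * (exp (- l {x,y}) / (1 + exp (- l {x,y}))) = F x * (1 - 1 / (1 + exp (- l {x,y})))"
        by simp
    qed
    also have "\<dots> = F x * (real (card N) - S)"
      unfolding S_def by (simp add: sum_distrib_left[symmetric] sum_subtractf)
    finally show ?thesis .
  qed
  moreover have "F x * (real (card N) - S) \<ge> F x * 1" using S Fx0 by (intro mult_left_mono) auto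
  ultimately have "F x \<ge> \<mu> x + F x" using Fxe by linarith
  then show False using mx by simp
qed

lemma part_b:
  assumes wt: "weighted_tree X E l" and small: "\<forall>e\<in>E. l e \<le> ln 2" and xX: "x \<in> X"
    and d3: "degree E x \<ge> 3"
  shows "(\<Sum>e\<in>{e\<in>E. x \<in> e}. 1 / (1 + exp (- l e))) \<le> real (degree E x) - 1"
proof -
  have t: "is_tree X E" using wt unfolding weighted_tree_def by auto
  have sg: "simple_graph X E" and fX: "finite X" using t unfolding is_tree_def simple_graph_def by auto
  have card: "card {e\<in>E. x \<in> e} = degree E x"
    unfolding degree_def edges_at(1)[OF sg] by (rule card_image[OF edges_at(2)[OF sg]])
  have b: "1 / (1 + exp (- l e)) \<le> 2 / 3" if "e \<in> {e\<in>E. x \<in> e}" for e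
  proof -
    have "l e \<le> ln 2" using small that by auto
    then have "exp (- ln 2) \<le> exp (- l e)" by simp
    then have "1 / 2 \<le> exp (- l e)" by (simp add: exp_minus)
    then show ?thesis by (simp add: field_simps)
  qed
  have "(\<Sum>e\<in>{e\<in>E. x \<in> e}. 1 / (1 + exp (- l e))) \<le> real (card {e\<in>E. x \<in> e}) * (2 / 3)"
    by (rule sum_bounded_above) (use b in auto)
  also have "\<dots> \<le> real (degree E x) - 1" using card d3 by simp
  finally show ?thesis .
qed

theorem corollary4p3:
  fixes X :: "'a set" and E :: "'a set set" and l :: "'a set \<Rightarrow> real"
  assumes "weighted_tree X E l"
  shows "(\<forall>x\<in>X. (\<Sum>e\<in>{e\<in>E. x \<in> e}. 1 / (1 + exp (- l e))) \<le> real (degree E x) - 1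
            \<longrightarrow> x \<notin> support X (maxdiv_measure X E l))
       \<and> ((\<forall>e\<in>E. l e \<le> ln 2) \<longrightarrow>
            (\<forall>x\<in>X. degree E x \<ge> 3 \<longrightarrow> x \<notin> support X (maxdiv_measure X E l)))"
  using part_a[OF assms] part_b[OF assms] by blast

end
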